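(* Let $\lambda>0$, let $\boldsymbol\alpha^\star$ be the optimal solution of the dual problem $\max_{\boldsymbol\alpha\ge\mathbf0}D_\lambda(\boldsymbol\alpha)$ and $\mathbf m^\star$ the optimal solution of the primal problem $\min_{\mathbf m\ge\mathbf0}P_\lambda(\mathbf m)$. Suppose $\mathbf q\in\mathbb R^{2nK}$ and $r\ge0$ satisfy $\|\boldsymbol\alpha^\star-\mathbf q\|_2^2\le r^2$. Then for every $k\in[p]$, $$\mathbf C_{k,:}\mathbf q+r\|\mathbf C_{k,:}\|_2\le\lambda\ \Longrightarrow\ m_k^\star=0.$$
   Context: Let $n,K,p\ge1$ be integers, $[n]=\{1,\dots,n\}$. For each $i\in[n]$ let $\mathbf x_i\in\mathbb R^p$ have nonnegative entries and let $\mathcal D_i,\mathcal S_i\subseteq[n]$ be sets of size $K$. Put $\mathbf c_{ij}=(\mathbf x_i-\mathbf x_j)\circ(\mathbf x_i-\mathbf x_j)$ (entrywise product). Vectors in $\mathbb R^{2nK}$ are indexed by the pairs $(i,l)$, $l\in\mathcal D_i$ ("different-class pairs") and $(i,j)$, $j\in\mathcal S_i$ ("same-class pairs"). $\mathbf C\in\mathbb R^{p\times2nK}$ has column $\mathbf c_{il}$ for each different-class pair and $-\mathbf c_{ij}$ for each same-class pair; $\mathbf C_{k,:}$ is its $k$-th row. Fix $L\ge U\ge0$, $\eta>0$; let $\mathbf t\in\mathbb R^{2nK}$ have entry $L$ at different-class pairs and $-U$ at same-class pairs; $\ell_s(x)=([s-x]_+)^2$ with $[z]_+=\max\{z,0\}$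 (entrywise for vectors); $\mathbf1$ is the all-ones vector. For $\lambda>0$ define on $\mathbf m\in\mathbb R^p_{\ge0}$ $$P_\lambda(\mathbf m)=\sum_{i\in[n]}\Big[\sum_{l\in\mathcal D_i}\ell_L(\mathbf m^\top\mathbf c_{il})+\sum_{j\in\mathcal S_i}\ell_{-U}(-\mathbf m^\top\mathbf c_{ij})\Big]+\lambda\Big(\mathbf m^\top\mathbf1+\frac\eta2\|\mathbf m\|_2^2\Big),$$ and on $\boldsymbol\alpha\in\mathbb R^{2nK}_{\ge0}$ $$D_\lambda(\boldsymbol\alpha)=-\frac14\|\boldsymbol\alpha\|_2^2+\mathbf t^\top\boldsymbol\alpha-\frac{\lambda\eta}2\|\mathbf m_\lambda(\boldsymbol\alpha)\|_2^2,\qquad\mathbf m_\lambda(\boldsymbol\alpha)=\frac1{\lambda\eta}[\mathbf C\boldsymbol\alpha-\lambda\mathbf1]_+.$$ *)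

theory Defs
  imports Complex_Main
begin

text \<open>Data: points x i (i in {1..n}) with coordinates x i k (k in {1..p});
  D i, S i are the different-class / same-class neighbour sets.
  Pairs are indexed by Inl (i,l) (different-class, l in D i) and
  Inr (i,j) (same-class, j in S i).\<close>

type_synonym pidx = "(nat \<times> nat) + (nat \<times> nat)"

definition pospart :: "real \<Rightarrow> real" where
  "pospart z = max z 0"

definition ell :: "real \<Rightarrow> real \<Rightarrow> real" where
  "ell s z = (pospart (s - z))\<^sup>2"

definition cvec :: "(nat \<Rightarrow> nat \<Rightarrow> real) \<Rightarrow> nat \<Rightarrow> nat \<Rightarrow> nat \<Rightarrow> real" where
  "cvec x i j k = (x i k - x j k) * (x i k - x j k)"

definition pairs :: "nat \<Rightarrow> (nat \<Rightarrow> nat set) \<Rightarrow> (nat \<Rightarrow> nat set) \<Rightarrow> pidx set" where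
  "pairs n D S = {Inl (i, l) | i l. i \<in> {1..n} \<and> l \<in> D i}
              \<union> {Inr (i, j) | i j. i \<in> {1..n} \<and> j \<in> S i}"

definition Cmat :: "(nat \<Rightarrow> nat \<Rightarrow> real) \<Rightarrow> nat \<Rightarrow> pidx \<Rightarrow> real" where
  "Cmat x k a = (case a of Inl (i, l) \<Rightarrow> cvec x i l k | Inr (i, j) \<Rightarrow> - cvec x i j k)"

definition tvec :: "real \<Rightarrow> real \<Rightarrow> pidx \<Rightarrow> real" where
  "tvec L U a = (case a of Inl _ \<Rightarrow> L | Inr _ \<Rightarrow> - U)"

definition Pobj :: "nat \<Rightarrow> nat \<Rightarrow> (nat \<Rightarrow> nat \<Rightarrow> real) \<Rightarrow> (nat \<Rightarrow> nat set) \<Rightarrow> (nat \<Rightarrow> nat set)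
    \<Rightarrow> real \<Rightarrow> real \<Rightarrow> real \<Rightarrow> real \<Rightarrow> (nat \<Rightarrow> real) \<Rightarrow> real" where
  "Pobj n p x D S L U \<eta> lam m =
     (\<Sum>i\<in>{1..n}. (\<Sum>l\<in>D i. ell L (\<Sum>k\<in>{1..p}. m k * cvec x i l k))
                 + (\<Sum>j\<in>S i. ell (- U) (- (\<Sum>k\<in>{1..p}. m k * cvec x i j k))))
     + lam * ((\<Sum>k\<in>{1..p}. m k) + \<eta> / 2 * (\<Sum>k\<in>{1..p}. (m k)\<^sup>2))"

definition mlam :: "nat \<Rightarrow> (nat \<Rightarrow> nat \<Rightarrow> real) \<Rightarrow> (nat \<Rightarrow> nat set) \<Rightarrow> (nat \<Rightarrow> nat set)
    \<Rightarrow> real \<Rightarrow> real \<Rightarrow> (pidx \<Rightarrow> real) \<Rightarrow> nat \<Rightarrow> real" where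
  "mlam n x D S \<eta> lam \<alpha> k =
     1 / (lam * \<eta>) * pospart ((\<Sum>a\<in>pairs n D S. Cmat x k a * \<alpha> a) - lam)"

definition Dobj :: "nat \<Rightarrow> nat \<Rightarrow> (nat \<Rightarrow> nat \<Rightarrow> real) \<Rightarrow> (nat \<Rightarrow> nat set) \<Rightarrow> (nat \<Rightarrow> nat set)
    \<Rightarrow> real \<Rightarrow> real \<Rightarrow> real \<Rightarrow> real \<Rightarrow> (pidx \<Rightarrow> real) \<Rightarrow> real" where
  "Dobj n p x D S L U \<eta> lam \<alpha> =
     - 1 / 4 * (\<Sum>a\<in>pairs n D S. (\<alpha> a)\<^sup>2)
     + (\<Sum>a\<in>pairs n D S. tvec L U a * \<alpha> a)
     - lam * \<eta> / 2 * (\<Sum>k\<in>{1..p}. (mlam n x D S \<eta> lam \<alpha> k)\<^sup>2)"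

end

theory Submission
  imports Defs "HOL-Analysis.Convex"
begin

definition sv :: "(nat \<Rightarrow> nat \<Rightarrow> real) \<Rightarrow> nat \<Rightarrow> real \<Rightarrow> real \<Rightarrow> (nat \<Rightarrow> real) \<Rightarrow> pidx \<Rightarrow> real" where
  "sv x p L U m a = tvec L U a - (\<Sum>k\<in>{1..p}. Cmat x k a * m k)"

lemma pairs_eq:
  "pairs n D S = Inl ` (Sigma {1..n} D) \<union> Inr ` (Sigma {1..n} S)"
  unfolding pairs_def by auto

lemma pairs_sum:
  assumes "\<And>i. i \<in> {1..n} \<Longrightarrow> finite (D i) \<and> finite (S i)"
  shows "finite (pairs n D S)"
    "sum f (pairs n D S) = (\<Sum>i\<in>{1..n}. (\<Sum>l\<in>D i. f (Inl (i,l))) + (\<Sum>j\<in>S i. f (Inr (i,j))))"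
proof -
  have f1: "finite (Sigma {1..n} D)" "finite (Sigma {1..n} S)"
    using assms by auto
  then show "finite (pairs n D S)" unfolding pairs_eq by auto
  have "sum f (pairs n D S) = sum f (Inl ` (Sigma {1..n} D)) + sum f (Inr ` (Sigma {1..n} S))"
    unfolding pairs_eq by (rule sum.union_disjoint) (use f1 in auto)
  also have "\<dots> = (\<Sum>z\<in>Sigma {1..n} D. f (Inl z)) + (\<Sum>z\<in>Sigma {1..n} S. f (Inr z))"
    by (simp add: sum.reindex)
  also have "\<dots> = (\<Sum>i\<in>{1..n}. (\<Sum>l\<in>D i. f (Inl (i,l)))) + (\<Sum>i\<in>{1..n}. (\<Sum>j\<in>S i. f (Inr (i,j))))"
    using assms by (simp add: sum.Sigma)
  finally show "sum f (pairs n D S) = (\<Sum>i\<in>{1..n}. (\<Sum>l\<in>D i. f (Inl (i,l))) + (\<Sum>j\<in>S i. f (Inr (i,j))))"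
    by (simp add: sum.distrib)
qed

lemma P_eq:
  assumes "\<And>i. i \<in> {1..n} \<Longrightarrow> finite (D i) \<and> finite (S i)"
  shows "Pobj n p x D S L U \<eta> lam m = (\<Sum>a\<in>pairs n D S. (pospart (sv x p L U m a))\<^sup>2)
     + lam * ((\<Sum>k\<in>{1..p}. m k) + \<eta> / 2 * (\<Sum>k\<in>{1..p}. (m k)\<^sup>2))"
proof -
  have a: "(\<Sum>k\<in>{1..p}. - cvec x i j k * m k) = - (\<Sum>k\<in>{1..p}. m k * cvec x i j k)" for i j
    by (simp add: sum_negf[symmetric] mult.commute)
  have b: "(\<Sum>k\<in>{1..p}. cvec x i j k * m k) = (\<Sum>k\<in>{1..p}. m k * cvec x i j k)" for i j
    by (simp add: mult.commute)
  have "(\<Sum>a\<in>pairs n D S. (pospart (sv x p L U m a))\<^sup>2) =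
     (\<Sum>i\<in>{1..n}. (\<Sum>l\<in>D i. ell L (\<Sum>k\<in>{1..p}. m k * cvec x i l k))
                 + (\<Sum>j\<in>S i. ell (- U) (- (\<Sum>k\<in>{1..p}. m k * cvec x i j k))))"
  proof -
    have t1: "(pospart (sv x p L U m (Inl (i, l))))\<^sup>2 = ell L (\<Sum>k = 1..p. m k * cvec x i l k)" for i l
      by (simp add: sv_def ell_def Cmat_def tvec_def mult.commute sum_negf)
    have t2: "(pospart (sv x p L U m (Inr (i, l))))\<^sup>2 = ell (-U) (-(\<Sum>k = 1..p. m k * cvec x i l k))" for i l
      by (simp add: sv_def ell_def Cmat_def tvec_def mult.commute sum_negf)
    show ?thesis by (rule trans, rule pairs_sum(2)[OF assms]) (simp_all only: t1 t2)
  qed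
  then show ?thesis unfolding Pobj_def by simp
qed

lemma pos_sq_ge:
  assumes "(al::real) \<ge> 0"
  shows "al * s - al\<^sup>2 / 4 \<le> (pospart s)\<^sup>2"
proof (cases "s \<ge> 0")
  case True
  have "0 \<le> (s - al/2)\<^sup>2" by simp
  then show ?thesis using True by (simp add: pospart_def power2_eq_square algebra_simps)
next
  case False
  then have "al * s \<le> 0" using assms by (simp add: mult_nonneg_nonpos)
  moreover have "al\<^sup>2 \<ge> 0" by simp
  ultimately have "al * s - al\<^sup>2 / 4 \<le> 0" by linarith
  then show ?thesis using False by (simp add: pospart_def max_def)
qed

lemma pos_sq_eq:
  "2 * pospart s * s - (2 * pospart s)\<^sup>2 / 4 = (pospart (s::real))\<^sup>2"
  by (simp add: pospart_def power2_eq_square split: split_max)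

lemma pos_sq_upper:
  "(pospart ((s::real) - h))\<^sup>2 \<le> (pospart s)\<^sup>2 - 2 * h * pospart s + h\<^sup>2"
proof (cases "s - h \<le> 0")
  case True
  have "0 \<le> (pospart s - h)\<^sup>2" by simp
  then show ?thesis using True by (simp add: pospart_def power2_eq_square algebra_simps)
next
  case False
  show ?thesis
  proof (cases "s \<ge> 0")
    case True
    then show ?thesis using False by (simp add: pospart_def power2_eq_square algebra_simps)
  next
    case F2: False
    have "(s - h)\<^sup>2 \<le> (-h)\<^sup>2" using False F2
      by (intro power_mono) auto
    then show ?thesis using False F2 by (simp add: pospart_def)
  qed
qed

lemma hbound:
  assumes "(c::real) > 0" "m \<ge> 0"
  shows "- c/2 * ((1/c) * pospart v)\<^sup>2 + c/2 * (m - (1/c) * pospart v)\<^sup>2 \<le> c/2 * m\<^sup>2 - v * m"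
proof (cases "v \<ge> 0")
  case True
  then show ?thesis using assms by (simp add: pospart_def power2_eq_square field_simps)
next
  case False
  then have "v * m \<le> 0" "m * v \<le> 0" using assms by (simp_all add: mult_nonpos_nonneg mult_nonneg_nonpos)
  then show ?thesis using False by (simp add: pospart_def)
qed

lemma heq:
  assumes "(c::real) > 0"
  shows "c/2 * ((1/c) * pospart v)\<^sup>2 - v * ((1/c) * pospart v) = - c/2 * ((1/c) * pospart v)\<^sup>2"
  using assms by (cases "v \<ge> 0") (simp_all add: pospart_def power2_eq_square field_simps)


lemma swap_lemma:
  fixes al T :: "'a \<Rightarrow> real" and Cm :: "nat \<Rightarrow> 'a \<Rightarrow> real"
  shows "(\<Sum>a\<in>A. al a * (\<Sum>k\<in>B. Cm k a * m k)) = (\<Sum>k\<in>B. (\<Sum>a\<in>A. Cm k a * al a) * m k)"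
proof -
  have "(\<Sum>a\<in>A. al a * (\<Sum>k\<in>B. Cm k a * m k)) = (\<Sum>a\<in>A. \<Sum>k\<in>B. al a * Cm k a * m k)"
    by (simp add: sum_distrib_left mult.assoc)
  also have "\<dots> = (\<Sum>k\<in>B. \<Sum>a\<in>A. al a * Cm k a * m k)" by (rule sum.swap)
  also have "\<dots> = (\<Sum>k\<in>B. (\<Sum>a\<in>A. Cm k a * al a) * m k)"
    by (intro sum.cong refl) (simp add: sum_distrib_left sum_distrib_right mult_ac)
  finally show ?thesis .
qed

lemma G_id:
  fixes al T :: "'a \<Rightarrow> real" and Cm :: "nat \<Rightarrow> 'a \<Rightarrow> real"
  shows "(\<Sum>a\<in>A. al a * (T a - (\<Sum>k\<in>B. Cm k a * m k)) - (al a)\<^sup>2 / 4)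
      + lam * ((\<Sum>k\<in>B. m k) + \<eta> / 2 * (\<Sum>k\<in>B. (m k)\<^sup>2))
    = (\<Sum>a\<in>A. T a * al a) - 1/4 * (\<Sum>a\<in>A. (al a)\<^sup>2)
      + (\<Sum>k\<in>B. lam * \<eta> / 2 * (m k)\<^sup>2 - ((\<Sum>a\<in>A. Cm k a * al a) - lam) * m k)"
proof -
  have 1: "(\<Sum>a\<in>A. al a * (T a - (\<Sum>k\<in>B. Cm k a * m k)) - (al a)\<^sup>2 / 4)
     = (\<Sum>a\<in>A. T a * al a) - (\<Sum>a\<in>A. al a * (\<Sum>k\<in>B. Cm k a * m k)) - 1/4 * (\<Sum>a\<in>A. (al a)\<^sup>2)"
    by (simp add: sum_subtractf right_diff_distrib sum_distrib_left mult.commute sum_divide_distrib)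
  have 2: "(\<Sum>k\<in>B. lam * \<eta> / 2 * (m k)\<^sup>2 - ((\<Sum>a\<in>A. Cm k a * al a) - lam) * m k)
     = lam * \<eta> / 2 * (\<Sum>k\<in>B. (m k)\<^sup>2) - (\<Sum>k\<in>B. (\<Sum>a\<in>A. Cm k a * al a) * m k) + lam * (\<Sum>k\<in>B. m k)"
    by (simp add: sum_subtractf left_diff_distrib sum.distrib sum_distrib_left)
  show ?thesis unfolding 1 2 swap_lemma by (simp add: algebra_simps)
qed


lemma weak_dual:
  assumes "lam > 0" "\<eta> > 0"
    and mpos: "\<forall>k\<in>{1..p}. m k \<ge> (0::real)"
    and apos: "\<forall>a\<in>pairs n D S. \<alpha> a \<ge> 0"
  shows "Dobj n p x D S L U \<eta> lam \<alpha> + lam * \<eta> / 2 * (\<Sum>k\<in>{1..p}. (m k - mlam n x D S \<eta> lam \<alpha> k)\<^sup>2)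
    \<le> (\<Sum>a\<in>pairs n D S. (pospart (sv x p L U m a))\<^sup>2)
     + lam * ((\<Sum>k\<in>{1..p}. m k) + \<eta> / 2 * (\<Sum>k\<in>{1..p}. (m k)\<^sup>2))"
proof -
  define c where "c = lam * \<eta>"
  have c: "c > 0" using assms unfolding c_def by simp
  define v where "v k = (\<Sum>a\<in>pairs n D S. Cmat x k a * \<alpha> a) - lam" for k
  have ml: "mlam n x D S \<eta> lam \<alpha> k = (1/c) * pospart (v k)" for k
    unfolding mlam_def v_def c_def by simp
  have s1: "(\<Sum>a\<in>pairs n D S. \<alpha> a * sv x p L U m a - (\<alpha> a)\<^sup>2 / 4)
      \<le> (\<Sum>a\<in>pairs n D S. (pospart (sv x p L U m a))\<^sup>2)"
    by (rule sum_mono) (use apos pos_sq_ge in auto)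
  have s2: "(\<Sum>k\<in>{1..p}. - c/2 * ((1/c) * pospart (v k))\<^sup>2 + c/2 * (m k - (1/c) * pospart (v k))\<^sup>2)
      \<le> (\<Sum>k\<in>{1..p}. c/2 * (m k)\<^sup>2 - v k * m k)"
    by (rule sum_mono) (use mpos hbound[OF c] in auto)
  have G: "(\<Sum>a\<in>pairs n D S. \<alpha> a * sv x p L U m a - (\<alpha> a)\<^sup>2 / 4)
      + lam * ((\<Sum>k\<in>{1..p}. m k) + \<eta> / 2 * (\<Sum>k\<in>{1..p}. (m k)\<^sup>2))
    = (\<Sum>a\<in>pairs n D S. tvec L U a * \<alpha> a) - 1/4 * (\<Sum>a\<in>pairs n D S. (\<alpha> a)\<^sup>2)
      + (\<Sum>k\<in>{1..p}. c / 2 * (m k)\<^sup>2 - v k * m k)"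
    unfolding sv_def v_def c_def by (rule G_id)
  have D: "Dobj n p x D S L U \<eta> lam \<alpha> + lam * \<eta> / 2 * (\<Sum>k\<in>{1..p}. (m k - mlam n x D S \<eta> lam \<alpha> k)\<^sup>2)
    = (\<Sum>a\<in>pairs n D S. tvec L U a * \<alpha> a) - 1/4 * (\<Sum>a\<in>pairs n D S. (\<alpha> a)\<^sup>2)
      + (\<Sum>k\<in>{1..p}. - c/2 * ((1/c) * pospart (v k))\<^sup>2 + c/2 * (m k - (1/c) * pospart (v k))\<^sup>2)"
    unfolding Dobj_def ml c_def[symmetric]
    by (simp add: sum.distrib sum_distrib_left sum_subtractf sum_negf sum_divide_distrib)
  show ?thesis using s1 s2 G D by linarith
qed

lemma strong_eq:
  assumes "lam > 0" "\<eta> > 0"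
    and mq: "\<forall>k\<in>{1..p}. m k = mlam n x D S \<eta> lam \<alpha> k"
    and aq: "\<forall>a\<in>pairs n D S. \<alpha> a = 2 * pospart (sv x p L U m a)"
  shows "Dobj n p x D S L U \<eta> lam \<alpha>
    = (\<Sum>a\<in>pairs n D S. (pospart (sv x p L U m a))\<^sup>2)
     + lam * ((\<Sum>k\<in>{1..p}. m k) + \<eta> / 2 * (\<Sum>k\<in>{1..p}. (m k)\<^sup>2))"
proof -
  define c where "c = lam * \<eta>"
  have c: "c > 0" using assms unfolding c_def by simp
  define v where "v k = (\<Sum>a\<in>pairs n D S. Cmat x k a * \<alpha> a) - lam" for k
  have ml: "mlam n x D S \<eta> lam \<alpha> k = (1/c) * pospart (v k)" for k
    unfolding mlam_def v_def c_def by simp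
  have s1: "(\<Sum>a\<in>pairs n D S. \<alpha> a * sv x p L U m a - (\<alpha> a)\<^sup>2 / 4)
      = (\<Sum>a\<in>pairs n D S. (pospart (sv x p L U m a))\<^sup>2)"
    by (rule sum.cong) (use aq pos_sq_eq in auto)
  have s2: "(\<Sum>k\<in>{1..p}. - c/2 * ((1/c) * pospart (v k))\<^sup>2)
      = (\<Sum>k\<in>{1..p}. c/2 * (m k)\<^sup>2 - v k * m k)"
    by (rule sum.cong) (use mq heq[OF c] ml in auto)
  have G: "(\<Sum>a\<in>pairs n D S. \<alpha> a * sv x p L U m a - (\<alpha> a)\<^sup>2 / 4)
      + lam * ((\<Sum>k\<in>{1..p}. m k) + \<eta> / 2 * (\<Sum>k\<in>{1..p}. (m k)\<^sup>2))
    = (\<Sum>a\<in>pairs n D S. tvec L U a * \<alpha> a) - 1/4 * (\<Sum>a\<in>pairs n D S. (\<alpha> a)\<^sup>2)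
      + (\<Sum>k\<in>{1..p}. c / 2 * (m k)\<^sup>2 - v k * m k)"
    unfolding sv_def v_def c_def by (rule G_id)
  have D: "Dobj n p x D S L U \<eta> lam \<alpha>
    = (\<Sum>a\<in>pairs n D S. tvec L U a * \<alpha> a) - 1/4 * (\<Sum>a\<in>pairs n D S. (\<alpha> a)\<^sup>2)
      + (\<Sum>k\<in>{1..p}. - c/2 * ((1/c) * pospart (v k))\<^sup>2)"
    unfolding Dobj_def ml c_def[symmetric]
    by (simp add: sum_distrib_left sum_negf)
  show ?thesis using s1 s2 G D by linarith
qed


lemma sum_delta_mult:
  assumes "finite A" "j \<in> A"
  shows "(\<Sum>k\<in>A. f k * (if k = j then t else 0)) = f j * (t::real)"
proof -
  have "(\<Sum>k\<in>A. f k * (if k = j then t else 0)) = (\<Sum>k\<in>A. if k = j then f k * t else 0)"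
    by (intro sum.cong) auto
  then show ?thesis using assms by simp
qed

lemma quad_nonneg_g:
  assumes "(Q::real) > 0" "\<And>t. t > 0 \<Longrightarrow> 0 \<le> t * g + t\<^sup>2 * Q"
  shows "g \<ge> 0"
proof (rule ccontr)
  assume "\<not> g \<ge> 0"
  define t where "t = - g / (2 * Q)"
  have t: "t > 0" using assms \<open>\<not> g \<ge> 0\<close> unfolding t_def by (simp add: divide_neg_pos)
  have "t * g + t\<^sup>2 * Q = - g\<^sup>2 / (4 * Q)"
    using assms(1) unfolding t_def by (simp add: power2_eq_square field_simps)
  moreover have "g\<^sup>2 / (4 * Q) > 0" using assms(1) \<open>\<not> g \<ge> 0\<close> by simp
  ultimately show False using assms(2)[OF t] by linarith
qed

lemma quad_nonpos_g:
  assumes "(Q::real) > 0" "M > 0" "\<And>t. t < 0 \<Longrightarrow> t \<ge> - M \<Longrightarrow> 0 \<le> t * g + t\<^sup>2 * Q"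
  shows "g \<le> 0"
proof (rule ccontr)
  assume ng: "\<not> g \<le> 0"
  define t where "t = - min M (g / Q) / 2"
  have gq: "g / Q > 0" using assms ng by simp
  have t: "t < 0" "t \<ge> - M" using assms gq unfolding t_def by auto
  have "t * Q \<ge> - (g / Q) / 2 * Q" unfolding t_def using assms(1)
    by (intro mult_right_mono) auto
  then have "t * Q \<ge> - g / 2" using assms(1) by simp
  then have "g + t * Q > 0" using ng by linarith
  then have "t * (g + t * Q) < 0" using t by (simp add: mult_neg_pos)
  moreover have "t * (g + t * Q) = t * g + t\<^sup>2 * Q" by (simp add: power2_eq_square algebra_simps)
  ultimately show False using assms(3)[OF t] by linarith
qed

lemma kkt:
  fixes F :: "(nat \<Rightarrow> real) \<Rightarrow> real"
  assumes fin: "finite (pairs n D S)" and lam: "lam > 0" and eta: "\<eta> > 0"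
    and Fdef: "\<And>m. F m = (\<Sum>a\<in>pairs n D S. (pospart (sv x p L U m a))\<^sup>2)
     + lam * ((\<Sum>k\<in>{1..p}. m k) + \<eta> / 2 * (\<Sum>k\<in>{1..p}. (m k)\<^sup>2))"
    and msnn: "\<forall>j\<in>{1..p}. ms j \<ge> 0"
    and opt: "\<forall>m. (\<forall>j\<in>{1..p}. m j \<ge> 0) \<longrightarrow> F ms \<le> F m"
    and j: "j \<in> {1..p}"
  shows "ms j = mlam n x D S \<eta> lam (\<lambda>a. 2 * pospart (sv x p L U ms a)) j"
proof -
  define ah where "ah a = 2 * pospart (sv x p L U ms a)" for a
  define g where "g = lam + lam * \<eta> * ms j - (\<Sum>a\<in>pairs n D S. Cmat x j a * ah a)"
  define Q where "Q = (\<Sum>a\<in>pairs n D S. (Cmat x j a)\<^sup>2) + lam * \<eta> / 2"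
  have Q: "Q > 0" unfolding Q_def using lam eta by (simp add: sum_nonneg add_nonneg_pos)
  have key: "0 \<le> t * g + t\<^sup>2 * Q" if t: "t \<ge> - ms j" for t
  proof -
    define mt where "mt k = ms k + (if k = j then t else 0)" for k
    have mtnn: "\<forall>k\<in>{1..p}. mt k \<ge> 0" using msnn t unfolding mt_def by auto
    have svt: "sv x p L U mt a = sv x p L U ms a - t * Cmat x j a" for a
    proof -
      have "(\<Sum>k\<in>{1..p}. Cmat x k a * mt k) = (\<Sum>k\<in>{1..p}. Cmat x k a * ms k) + (\<Sum>k\<in>{1..p}. Cmat x k a * (if k = j then t else 0))"
        unfolding mt_def by (simp add: distrib_left sum.distrib)
      also have "\<dots> = (\<Sum>k\<in>{1..p}. Cmat x k a * ms k) + Cmat x j a * t"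
        using j by (simp add: sum_delta_mult)
      finally show ?thesis unfolding sv_def by simp
    qed
    have s1: "(\<Sum>k\<in>{1..p}. mt k) = (\<Sum>k\<in>{1..p}. ms k) + t"
      unfolding mt_def using j by (simp add: sum.distrib)
    have "(\<Sum>k\<in>{1..p}. (mt k)\<^sup>2) = (\<Sum>k\<in>{1..p}. (ms k)\<^sup>2 + (if k = j then 2 * t * ms k + t\<^sup>2 else 0))"
      unfolding mt_def by (intro sum.cong) (auto simp: power2_eq_square algebra_simps)
    then have s2: "(\<Sum>k\<in>{1..p}. (mt k)\<^sup>2) = (\<Sum>k\<in>{1..p}. (ms k)\<^sup>2) + (2 * t * ms j + t\<^sup>2)"
      using j by (simp add: sum.distrib)
    have s3: "(\<Sum>a\<in>pairs n D S. (pospart (sv x p L U mt a))\<^sup>2)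
        \<le> (\<Sum>a\<in>pairs n D S. (pospart (sv x p L U ms a))\<^sup>2 - 2 * (t * Cmat x j a) * pospart (sv x p L U ms a) + (t * Cmat x j a)\<^sup>2)"
      unfolding svt by (rule sum_mono) (rule pos_sq_upper)
    have s4: "(\<Sum>a\<in>pairs n D S. (pospart (sv x p L U ms a))\<^sup>2 - 2 * (t * Cmat x j a) * pospart (sv x p L U ms a) + (t * Cmat x j a)\<^sup>2)
        = (\<Sum>a\<in>pairs n D S. (pospart (sv x p L U ms a))\<^sup>2) - t * (\<Sum>a\<in>pairs n D S. Cmat x j a * ah a)
          + t\<^sup>2 * (\<Sum>a\<in>pairs n D S. (Cmat x j a)\<^sup>2)"
      unfolding ah_def
      by (simp add: sum.distrib sum_subtractf sum_distrib_left power_mult_distrib mult_ac)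
    have "F ms \<le> F mt" using opt mtnn by blast
    also have "F mt \<le> F ms + t * g + t\<^sup>2 * Q"
      unfolding Fdef s1 s2 g_def Q_def using s3 s4
      by (simp add: algebra_simps power2_eq_square)
    finally show ?thesis by simp
  qed
  have msj: "ms j \<ge> 0" using msnn j by blast
  have g0: "g \<ge> 0"
  proof (rule quad_nonneg_g[OF Q])
    fix t :: real assume "t > 0"
    then show "0 \<le> t * g + t\<^sup>2 * Q" using key msj by simp
  qed
  have gj: "ms j > 0 \<Longrightarrow> g = 0"
    using quad_nonpos_g[OF Q, of "ms j" g] key g0 by auto
  have ahe: "(\<lambda>a. 2 * pospart (sv x p L U ms a)) = ah" by (simp add: ah_def fun_eq_iff)
  show ?thesis
  proof (cases "ms j > 0")
    case True
    then have "(\<Sum>a\<in>pairs n D S. Cmat x j a * ah a) - lam = lam * \<eta> * ms j"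
      using gj unfolding g_def by linarith
    then show ?thesis using True lam eta unfolding mlam_def ah_def
      by (simp add: pospart_def field_simps)
  next
    case False
    then have "ms j = 0" using msnn j by force
    then have "(\<Sum>a\<in>pairs n D S. Cmat x j a * ah a) - lam \<le> 0"
      using g0 unfolding g_def by simp
    then show ?thesis using \<open>ms j = 0\<close> unfolding mlam_def ah_def
      by (simp add: pospart_def field_simps)
  qed
qed

theorem theorem4:
  fixes n K p :: nat
    and x :: "nat \<Rightarrow> nat \<Rightarrow> real"
    and D S :: "nat \<Rightarrow> nat set"
    and L U \<eta> lam r :: real
    and \<alpha>s q :: "pidx \<Rightarrow> real"
    and ms :: "nat \<Rightarrow> real"
    and k :: nat
  assumes "n \<ge> 1" and "K \<ge> 1" and "p \<ge> 1"
    and "\<And>i k. i \<in> {1..n} \<Longrightarrow> k \<in> {1..p} \<Longrightarrow> x i k \<ge> 0"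
    and "\<And>i. i \<in> {1..n} \<Longrightarrow> D i \<subseteq> {1..n} \<and> card (D i) = K"
    and "\<And>i. i \<in> {1..n} \<Longrightarrow> S i \<subseteq> {1..n} \<and> card (S i) = K"
    and "L \<ge> U" and "U \<ge> 0" and "\<eta> > 0" and "lam > 0"
    and dual_opt: "(\<forall>a\<in>pairs n D S. \<alpha>s a \<ge> 0) \<and>
        (\<forall>\<alpha>. (\<forall>a\<in>pairs n D S. \<alpha> a \<ge> 0) \<longrightarrow>
              Dobj n p x D S L U \<eta> lam \<alpha> \<le> Dobj n p x D S L U \<eta> lam \<alpha>s)"
    and primal_opt: "(\<forall>j\<in>{1..p}. ms j \<ge> 0) \<and>
        (\<forall>m. (\<forall>j\<in>{1..p}. m j \<ge> 0) \<longrightarrow>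
              Pobj n p x D S L U \<eta> lam ms \<le> Pobj n p x D S L U \<eta> lam m)"
    and "r \<ge> 0"
    and "(\<Sum>a\<in>pairs n D S. (\<alpha>s a - q a)\<^sup>2) \<le> r\<^sup>2"
    and "k \<in> {1..p}"
    and "(\<Sum>a\<in>pairs n D S. Cmat x k a * q a)
           + r * sqrt (\<Sum>a\<in>pairs n D S. (Cmat x k a)\<^sup>2) \<le> lam"
  shows "ms k = 0"
proof -
  note A = assms
  have fin1: "\<And>i. i \<in> {1..n} \<Longrightarrow> finite (D i) \<and> finite (S i)"
    using A(5) A(6) by (meson finite_atLeastAtMost finite_subset)
  have fin: "finite (pairs n D S)" by (rule pairs_sum(1)[OF fin1])
  define F where "F m = (\<Sum>a\<in>pairs n D S. (pospart (sv x p L U m a))\<^sup>2)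
     + lam * ((\<Sum>k\<in>{1..p}. m k) + \<eta> / 2 * (\<Sum>k\<in>{1..p}. (m k)\<^sup>2))" for m
  have PF: "Pobj n p x D S L U \<eta> lam m = F m" for m
    unfolding F_def by (rule P_eq[OF fin1])
  have msnn: "\<forall>j\<in>{1..p}. ms j \<ge> 0" using primal_opt by blast
  have opt: "\<forall>m. (\<forall>j\<in>{1..p}. m j \<ge> 0) \<longrightarrow> F ms \<le> F m"
    using primal_opt unfolding PF by blast
  define ah where "ah = (\<lambda>a. 2 * pospart (sv x p L U ms a))"
  have kk: "\<forall>j\<in>{1..p}. ms j = mlam n x D S \<eta> lam ah j"
    unfolding ah_def using kkt[OF fin A(10) A(9) F_def msnn opt] by blast
  have ahnn: "\<forall>a\<in>pairs n D S. ah a \<ge> 0" unfolding ah_def pospart_def by simp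
  have se: "Dobj n p x D S L U \<eta> lam ah = F ms"
    unfolding F_def by (rule strong_eq[OF A(10) A(9) kk]) (simp add: ah_def)
  have wd: "Dobj n p x D S L U \<eta> lam \<alpha>s + lam * \<eta> / 2 * (\<Sum>k\<in>{1..p}. (ms k - mlam n x D S \<eta> lam \<alpha>s k)\<^sup>2) \<le> F ms"
    unfolding F_def by (rule weak_dual[OF A(10) A(9) msnn]) (use dual_opt in blast)
  have "Dobj n p x D S L U \<eta> lam ah \<le> Dobj n p x D S L U \<eta> lam \<alpha>s"
    using dual_opt ahnn by blast
  then have "lam * \<eta> / 2 * (\<Sum>k\<in>{1..p}. (ms k - mlam n x D S \<eta> lam \<alpha>s k)\<^sup>2) \<le> 0"
    using se wd by linarith
  moreover have "lam * \<eta> / 2 > 0" using A(9) A(10) by simp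
  ultimately have "(\<Sum>k\<in>{1..p}. (ms k - mlam n x D S \<eta> lam \<alpha>s k)\<^sup>2) \<le> 0"
    by (meson mult_pos_pos not_le)
  moreover have "(\<Sum>k\<in>{1..p}. (ms k - mlam n x D S \<eta> lam \<alpha>s k)\<^sup>2) \<ge> 0" by (simp add: sum_nonneg)
  ultimately have "(\<Sum>k\<in>{1..p}. (ms k - mlam n x D S \<eta> lam \<alpha>s k)\<^sup>2) = 0" by linarith
  then have "(ms k - mlam n x D S \<eta> lam \<alpha>s k)\<^sup>2 = 0"
    using A(15) by (subst (asm) sum_nonneg_eq_0_iff) auto
  then have msk: "ms k = mlam n x D S \<eta> lam \<alpha>s k" by simp
  define Ak where "Ak = (\<Sum>a\<in>pairs n D S. (Cmat x k a)\<^sup>2)"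
  define B where "B = (\<Sum>a\<in>pairs n D S. (\<alpha>s a - q a)\<^sup>2)"
  have cs: "(\<Sum>a\<in>pairs n D S. Cmat x k a * (\<alpha>s a - q a))\<^sup>2 \<le> Ak * B"
    unfolding Ak_def B_def by (rule Cauchy_Schwarz_ineq_sum)
  have "(\<Sum>a\<in>pairs n D S. Cmat x k a * (\<alpha>s a - q a)) \<le> sqrt (Ak * B)"
    using cs real_le_rsqrt by blast
  also have "\<dots> = sqrt Ak * sqrt B" by (simp add: real_sqrt_mult)
  also have "\<dots> \<le> sqrt Ak * r"
  proof -
    have "sqrt B \<le> sqrt (r\<^sup>2)" unfolding B_def using A(14) by (rule real_sqrt_le_mono)
    then have "sqrt B \<le> r" using A(13) by simp
    moreover have "sqrt Ak \<ge> 0" unfolding Ak_def by (simp add: sum_nonneg)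
    ultimately show ?thesis by (simp add: mult_left_mono)
  qed
  finally have c1: "(\<Sum>a\<in>pairs n D S. Cmat x k a * (\<alpha>s a - q a)) \<le> sqrt Ak * r" .
  have "(\<Sum>a\<in>pairs n D S. Cmat x k a * \<alpha>s a) = (\<Sum>a\<in>pairs n D S. Cmat x k a * q a)
      + (\<Sum>a\<in>pairs n D S. Cmat x k a * (\<alpha>s a - q a))"
    by (simp add: sum.distrib[symmetric] algebra_simps)
  then have "(\<Sum>a\<in>pairs n D S. Cmat x k a * \<alpha>s a) \<le> lam"
    using c1 A(16) unfolding Ak_def by (simp add: mult.commute)
  then have "mlam n x D S \<eta> lam \<alpha>s k = 0" unfolding mlam_def pospart_def by simp
  then show ?thesis using msk by simp
qed

end
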